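(* Let $T=\{t_1,\ldots,t_N\}$ be documents containing words from a dictionary $\{w_1,\ldots,w_D\}$, and let $\#(w)$ denote the number of documents containing word $w$. Let $h_1,\ldots,h_k$ be hash functions whose values $h_j(t)$ are independent and uniform on $[0,1]$. Consider the mapper MinHashSampleMap which, for each document $t$, each word $w$ in $t$, and each $j=1,\ldots,k$, emits $((w,j)\to h_j(t))$ if and only if $h_j(t)\le\frac{c\log(Dk)}{\#(w)}$, where $c=3$. Then the expected total number of emitted key-value pairs (shuffle size) is at most $cDk\log(Dk)=O(Dk\log(Dk))$; in particular, with $k=1/\epsilon$ for $\epsilon\in(0,1]$, it is $O((D/\epsilon)\log(D/\epsilon))$.
   Context: $\log$ denotes the natural logarithm. The shuffle size is the total number of key-value pairs emitted by all mappers. *)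

theory Defs
  imports "HOL-Probability.Probability"
begin

text \<open>Documents t_1..t_N are given as docs i (i < N), each a set of words.
  Hash values are indexed by (document index i, hash index j) with j in {1..k}.\<close>

definition minhash_c :: real where "minhash_c = 3"

definition doc_freq :: "nat \<Rightarrow> (nat \<Rightarrow> 'w set) \<Rightarrow> 'w \<Rightarrow> nat" where
  "doc_freq N docs w = card {i. i < N \<and> w \<in> docs i}"

definition minhash_sample_emitted ::
  "nat \<Rightarrow> (nat \<Rightarrow> 'w set) \<Rightarrow> nat \<Rightarrow> nat \<Rightarrow> (nat \<times> nat \<Rightarrow> real) \<Rightarrow> (nat \<times> 'w \<times> nat) set" where
  "minhash_sample_emitted N docs D k h =
     {(i, w, j). i < N \<and> w \<in> docs i \<and> j \<in> {1..k} \<and>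
        h (i, j) \<le> minhash_c * ln (real D * real k) / real (doc_freq N docs w)}"

definition shuffle_size ::
  "nat \<Rightarrow> (nat \<Rightarrow> 'w set) \<Rightarrow> nat \<Rightarrow> nat \<Rightarrow> (nat \<times> nat \<Rightarrow> real) \<Rightarrow> nat" where
  "shuffle_size N docs D k h = card (minhash_sample_emitted N docs D k h)"

definition hash_space :: "nat \<Rightarrow> nat \<Rightarrow> (nat \<times> nat \<Rightarrow> real) measure" where
  "hash_space N k = PiM ({..<N} \<times> {1..k}) (\<lambda>_. uniform_measure lborel {0..1::real})"

end

theory Submission imports Defs begin

lemma comp_bound:
  fixes t :: real and i :: nat and j :: nat and N k :: nat
  assumes "t \<ge> 0" "i < N" "j \<in> {1..k}"
  shows "(\<integral>\<^sup>+ h. indicator {..t} (h (i,j)) \<partial>hash_space N k) \<le> ennreal t"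
proof -
  let ?U = "uniform_measure lborel {0..1::real}"
  have ps: "prob_space ?U" by (intro prob_space_uniform_measure) auto
  have meas: "(\<lambda>h. h (i,j)) \<in> hash_space N k \<rightarrow>\<^sub>M ?U"
    unfolding hash_space_def using assms by (intro measurable_component_singleton) auto
  have "(\<integral>\<^sup>+ h. indicator {..t} (h (i,j)) \<partial>hash_space N k)
      = (\<integral>\<^sup>+ x. indicator {..t} x \<partial>distr (hash_space N k) ?U (\<lambda>h. h (i,j)))"
    unfolding hash_space_def
    by (subst nn_integral_distr) (use meas in \<open>auto simp: hash_space_def\<close>)
  also have "distr (hash_space N k) ?U (\<lambda>h. h (i,j)) = ?U"
    unfolding hash_space_def using assms ps by (intro distr_PiM_component) auto
  also have "(\<integral>\<^sup>+ x. indicator {..t} x \<partial>?U) = emeasure ?U {..t}"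
    by (subst nn_integral_indicator) auto
  also have "\<dots> = emeasure lborel ({0..1} \<inter> {..t})" by (simp add: divide_ennreal_def)
  also have "\<dots> \<le> emeasure lborel {0..t}" by (intro emeasure_mono) auto
  also have "\<dots> = ennreal t" using assms by simp
  finally show ?thesis .
qed

lemma meas_ind:
  fixes t :: real
  assumes "i < N" "j \<in> {1..k}"
  shows "(\<lambda>h. indicator {..t} (h (i,j)) :: ennreal) \<in> borel_measurable (hash_space N k)"
proof -
  let ?U = "uniform_measure lborel {0..1::real}"
  have meas: "(\<lambda>h. h (i,j)) \<in> hash_space N k \<rightarrow>\<^sub>M ?U"
    unfolding hash_space_def using assms by (intro measurable_component_singleton) auto
  have "(indicator {..t} :: real \<Rightarrow> ennreal) \<in> borel_measurable ?U"
    by (simp add: measurable_cong_sets[OF refl sets_uniform_measure[symmetric]] borel_measurable_indicator)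
  from measurable_compose[OF meas this] show ?thesis by (simp add: o_def)
qed

lemma main_bound:
  fixes W :: "'w set" and docs :: "nat \<Rightarrow> 'w set" and N D k :: nat
  assumes "finite W" and "card W = D"
    and "\<And>i. i < N \<Longrightarrow> docs i \<subseteq> W"
    and "k \<ge> 1"
  shows "(\<integral>\<^sup>+ h. ennreal (real (shuffle_size N docs D k h)) \<partial>hash_space N k)
           \<le> ennreal (minhash_c * real D * real k * ln (real D * real k))"
proof (cases "D = 0")
  case True
  then have "W = {}" using assms by auto
  then have "\<And>h. minhash_sample_emitted N docs D k h = {}"
    using assms(3) unfolding minhash_sample_emitted_def by auto
  then show ?thesis by (simp add: shuffle_size_def)
next
  case False
  define L where "L = ln (real D * real k)"
  have "1 \<le> D * k" using False assms(4) by (simp add: Suc_le_eq)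
  then have "1 \<le> real D * real k" by (metis of_nat_1 of_nat_le_iff of_nat_mult)
  then have L0: "L \<ge> 0" unfolding L_def by simp
  define tw where "tw w = minhash_c * L / real (doc_freq N docs w)" for w
  have tw0: "tw w \<ge> 0" for w unfolding tw_def minhash_c_def using L0 by simp
  define I where "I = (SIGMA i:{..<N}. SIGMA w: docs i. {1..k})"
  have fin_docs: "finite (docs i)" if "i < N" for i using assms(1,3) that finite_subset by blast
  have finI: "finite I" unfolding I_def using fin_docs by (auto intro!: finite_SigmaI)
  define P where "P x h = (h (fst x, snd (snd x)) \<le> tw (fst (snd x)))" for x and h :: "nat \<times> nat \<Rightarrow> real"
  have S: "minhash_sample_emitted N docs D k h = {x\<in>I. P x h}" for h
    unfolding minhash_sample_emitted_def I_def P_def tw_def L_def by auto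
  have card_eq: "ennreal (real (shuffle_size N docs D k h))
     = (\<Sum>x\<in>I. indicator {..tw (fst (snd x))} (h (fst x, snd (snd x))))" for h
  proof -
    have "real (shuffle_size N docs D k h) = (\<Sum>x\<in>I. if P x h then 1 else 0)"
      unfolding shuffle_size_def S using finI
      by (simp add: sum.inter_filter[symmetric])
    also have "\<dots> = (\<Sum>x\<in>I. indicator {..tw (fst (snd x))} (h (fst x, snd (snd x))))"
      by (intro sum.cong) (auto simp: P_def indicator_def)
    finally have "ennreal (real (shuffle_size N docs D k h)) = ennreal (\<Sum>x\<in>I. indicator {..tw (fst (snd x))} (h (fst x, snd (snd x))))" by simp
    also have "\<dots> = (\<Sum>x\<in>I. ennreal (indicator {..tw (fst (snd x))} (h (fst x, snd (snd x)))))"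
      by (rule sum_ennreal[symmetric]) auto
    finally show ?thesis by (simp only: ennreal_indicator)
  qed
  have "(\<integral>\<^sup>+ h. ennreal (real (shuffle_size N docs D k h)) \<partial>hash_space N k)
      = (\<Sum>x\<in>I. \<integral>\<^sup>+ h. indicator {..tw (fst (snd x))} (h (fst x, snd (snd x))) \<partial>hash_space N k)"
    unfolding card_eq
    by (rule nn_integral_sum) (auto simp: I_def intro!: meas_ind)
  also have "\<dots> \<le> (\<Sum>x\<in>I. ennreal (tw (fst (snd x))))"
    by (intro sum_mono comp_bound tw0) (auto simp: I_def)
  also have "\<dots> = ennreal (\<Sum>x\<in>I. tw (fst (snd x)))"
    using tw0 by (simp add: sum_ennreal)
  also have "(\<Sum>x\<in>I. tw (fst (snd x))) = (\<Sum>i<N. \<Sum>w\<in>docs i. real k * tw w)"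
  proof -
    have "(\<Sum>x\<in>I. tw (fst (snd x))) = (\<Sum>i<N. \<Sum>y\<in>docs i \<times> {1..k}. tw (fst y))"
      unfolding I_def using fin_docs
        sum.Sigma[of "{..<N}" "\<lambda>i. docs i \<times> {1..k}" "\<lambda>i y. tw (fst y)"]
      by (simp add: case_prod_beta)
    also have "\<dots> = (\<Sum>i<N. \<Sum>w\<in>docs i. real k * tw w)"
    proof (intro sum.cong refl)
      fix i assume "i \<in> {..<N}"
      then have "finite (docs i)" using fin_docs by auto
      then show "(\<Sum>y\<in>docs i \<times> {1..k}. tw (fst y)) = (\<Sum>w\<in>docs i. real k * tw w)"
        using sum.Sigma[of "docs i" "\<lambda>_. {1..k}" "\<lambda>w j. tw w"]
        by (simp add: case_prod_beta)
    qed
    finally show ?thesis .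
  qed
  also have "\<dots> = (\<Sum>i<N. \<Sum>w\<in>W. if w \<in> docs i then real k * tw w else 0)"
  proof (rule sum.cong[OF refl])
    fix i assume "i \<in> {..<N}"
    then have "W \<inter> docs i = docs i" using assms(3) by auto
    then show "(\<Sum>w\<in>docs i. real k * tw w) = (\<Sum>w\<in>W. if w \<in> docs i then real k * tw w else 0)"
      using assms(1) by (simp add: sum.If_cases Int_def)
  qed
  also have "\<dots> = (\<Sum>w\<in>W. \<Sum>i<N. if w \<in> docs i then real k * tw w else 0)"
    by (rule sum.swap)
  also have "\<dots> = (\<Sum>w\<in>W. real (doc_freq N docs w) * (real k * tw w))"
    by (intro sum.cong refl) (simp add: sum.If_cases doc_freq_def Int_def)
  also have "\<dots> \<le> (\<Sum>w\<in>W. minhash_c * real k * L)"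
  proof (intro sum_mono)
    fix w
    show "real (doc_freq N docs w) * (real k * tw w) \<le> minhash_c * real k * L"
      using L0 by (cases "doc_freq N docs w = 0") (auto simp: tw_def minhash_c_def)
  qed
  also have "\<dots> = minhash_c * real D * real k * L" using assms(2) by simp
  finally show ?thesis unfolding L_def by (simp add: ennreal_leI)
qed
theorem theorem6:
  fixes W :: "'w set" and docs :: "nat \<Rightarrow> 'w set" and N D k :: nat
  assumes "finite W" and "card W = D"
    and "\<And>i. i < N \<Longrightarrow> docs i \<subseteq> W"
    and "k \<ge> 1"
  shows "(\<integral>\<^sup>+ h. ennreal (real (shuffle_size N docs D k h)) \<partial>hash_space N k)
           \<le> ennreal (minhash_c * real D * real k * ln (real D * real k))
         \<and> (\<forall>\<epsilon>::real. 0 < \<epsilon> \<and> \<epsilon> \<le> 1 \<and> real k = 1 / \<epsilon> \<longrightarrow>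
           (\<integral>\<^sup>+ h. ennreal (real (shuffle_size N docs D k h)) \<partial>hash_space N k)
           \<le> ennreal (minhash_c * (real D / \<epsilon>) * ln (real D / \<epsilon>)))"
proof -
  note mb = main_bound[OF assms]
  have "real D / e = real D * real k" if "real k = 1 / e" for e :: real
    using that by (simp add: divide_inverse)
  then show ?thesis using mb by (auto simp: mult.assoc)
qed

end
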